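(* Let $A$ be a finite-dimensional real associative $^*$-algebra with unity as described in the context, let $S$ be a genuine imaginary sphere (gis) of $A$ and let $M$ be the real vector subspace of $A$ inducing $S$. Then there exists a norm $\|\cdot\|$ on the real vector space $A$ such that $\|x\|^2=n(x)$ for every $x\in M$.
   Context: $A$ is a real associative algebra with unity $1$, of finite dimension $d>0$, with $\mathbb{R}$ identified with $\mathbb{R}1$, equipped with an anti-involution $x\mapsto x^c$, i.e. a real linear map with $(x^c)^c=x$, $(xy)^c=y^cx^c$ for all $x,y\in A$, and $x^c=x$ for $x\in\mathbb{R}$. The trace is $t(x)=x+x^c$ and the (squared) norm is $n(x)=xx^c$. The quadratic cone is $Q_A=\mathbb{R}\cup\{x\in A : t(x)\in\mathbb{R},\ n(x)\in\mathbb{R},\ 4n(x)>t(x)^2\}$, and $\mathbb{S}_A=\{J\in Q_A: J^2=-1\}$ (assumed nonempty); one has $\mathbb{S}_A=\{J\in A: t(J)=0,\ n(J)=1\}$. For $J\in\mathbb{S}_A$, $\mathbb{C}_J$ is the real subalgebra spanned by $1,J$. A nonempty subset $S\subset A$ is a genuine imaginary sphere (gis) if there is a real vector subspace $M$ with $\mathbb{R}\subset M\subset Q_A$ and $S=M\cap\mathbb{S}_A$; such $M$ is unique (namely $M=\bigcup_{J\in S}\mathbb{C}_J$) and is called the subspace inducing $S$. *)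

theory Defs
  imports Complex_Main
begin

definition anti_involution :: "('a::real_algebra_1 \<Rightarrow> 'a) \<Rightarrow> bool" where
  "anti_involution cj \<longleftrightarrow>
     (\<forall>x y. cj (x + y) = cj x + cj y) \<and>
     (\<forall>(r::real) x. cj (r *\<^sub>R x) = r *\<^sub>R cj x) \<and>
     (\<forall>x. cj (cj x) = x) \<and>
     (\<forall>x y. cj (x * y) = cj y * cj x) \<and>
     (\<forall>r::real. cj (of_real r) = of_real r)"

definition trA :: "('a::real_algebra_1 \<Rightarrow> 'a) \<Rightarrow> 'a \<Rightarrow> 'a" where
  "trA cj x = x + cj x"

definition nA :: "('a::real_algebra_1 \<Rightarrow> 'a) \<Rightarrow> 'a \<Rightarrow> 'a" where
  "nA cj x = x * cj x"

definition quad_cone :: "('a::real_algebra_1 \<Rightarrow> 'a) \<Rightarrow> 'a set" where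
  "quad_cone cj = \<real> \<union> {x. \<exists>a b::real. trA cj x = of_real a \<and> nA cj x = of_real b \<and> 4 * b > a\<^sup>2}"

definition imag_sphere :: "('a::real_algebra_1 \<Rightarrow> 'a) \<Rightarrow> 'a set" where
  "imag_sphere cj = {J \<in> quad_cone cj. J * J = - 1}"

definition induces_gis :: "('a::real_algebra_1 \<Rightarrow> 'a) \<Rightarrow> 'a set \<Rightarrow> 'a set \<Rightarrow> bool" where
  "induces_gis cj M S \<longleftrightarrow> subspace M \<and> \<real> \<subseteq> M \<and> M \<subseteq> quad_cone cj \<and> S = M \<inter> imag_sphere cj"

definition gis :: "('a::real_algebra_1 \<Rightarrow> 'a) \<Rightarrow> 'a set \<Rightarrow> bool" where
  "gis cj S \<longleftrightarrow> S \<noteq> {} \<and> (\<exists>M. induces_gis cj M S)"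

definition is_norm :: "('a::real_vector \<Rightarrow> real) \<Rightarrow> bool" where
  "is_norm N \<longleftrightarrow> (\<forall>x. N x \<ge> 0) \<and> (\<forall>x. N x = 0 \<longleftrightarrow> x = 0) \<and>
     (\<forall>(r::real) x. N (r *\<^sub>R x) = \<bar>r\<bar> * N x) \<and> (\<forall>x y. N (x + y) \<le> N x + N y)"

end

theory Submission
  imports Defs
begin

lemma discr_aux:
  fixes a b c :: real
  assumes "\<And>t. a * t^2 + b * t + c \<ge> 0" "a \<ge> 0"
  shows "b^2 \<le> 4 * a * c"
proof (cases "a = 0")
  case True
  show ?thesis
  proof (cases "b = 0")
    case False
    have "a * (-(c+1)/b)^2 + b * (-(c+1)/b) + c \<ge> 0" using assms(1) .
    with True False show ?thesis by (simp add: field_simps)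
  qed (simp add: True)
next
  case False
  with assms(2) have a: "a > 0" by simp
  have "a * (-b/(2*a))^2 + b * (-b/(2*a)) + c \<ge> 0" using assms(1) .
  hence "b^2/(4*a) - b^2/(2*a) + c \<ge> 0" using a by (simp add: power2_eq_square field_simps)
  hence "c - b^2/(4*a) \<ge> 0" by (simp add: field_simps)
  hence "b^2/(4*a) \<le> c" by simp
  thus ?thesis using a by (simp add: field_simps)
qed

lemma nA_add:
  assumes "anti_involution cj"
  shows "nA cj (x + y) = nA cj x + nA cj y + (x * cj y + y * cj x)"
  using assms unfolding anti_involution_def nA_def by (simp add: algebra_simps)

lemma nA_scale:
  assumes "anti_involution cj"
  shows "nA cj (r *\<^sub>R x) = (r^2) *\<^sub>R nA cj x"
  using assms unfolding anti_involution_def nA_def by (simp add: power2_eq_square)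

lemma nA_real:
  assumes "anti_involution cj"
  shows "nA cj (of_real a) = of_real (a^2)"
  using assms unfolding anti_involution_def nA_def by (simp add: power2_eq_square)

lemma quad_form:
  fixes cj :: "'a::real_algebra_1 \<Rightarrow> 'a" and M :: "'a set"
  assumes inv: "anti_involution cj" and sub: "subspace M" and MQ: "M \<subseteq> quad_cone cj"
  shows "\<exists>q. (\<forall>x\<in>M. nA cj x = of_real (q x)) \<and> (\<forall>x\<in>M. x \<noteq> 0 \<longrightarrow> q x > 0) \<and> q 0 = 0
     \<and> (\<forall>x\<in>M. \<forall>r. q (r *\<^sub>R x) = r^2 * q x)
     \<and> (\<forall>x\<in>M. \<forall>y\<in>M. sqrt (q (x + y)) \<le> sqrt (q x) + sqrt (q y))"
proof -
  have ex: "\<exists>r. nA cj x = of_real r \<and> (x \<noteq> 0 \<longrightarrow> r > 0)" if "x \<in> M" for x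
  proof -
    have "x \<in> quad_cone cj" using that MQ by auto
    then consider (R) "x \<in> \<real>" | (Q) a b where "trA cj x = of_real a" "nA cj x = of_real b" "4 * b > a\<^sup>2"
      unfolding quad_cone_def by blast
    then show ?thesis
    proof cases
      case R
      then obtain a where a: "x = of_real a" by (auto elim: Reals_cases)
      show ?thesis using nA_real[OF inv, of a] a by (intro exI[of _ "a^2"]) simp
    next
      case Q
      have "b > 0" using Q(3) by (smt (verit) zero_le_power2)
      then show ?thesis using Q by auto
    qed
  qed
  define q where "q x = (THE r. nA cj x = of_real r)" for x
  have qM: "nA cj x = of_real (q x)" if xM: "x \<in> M" for x
  proof -
    obtain r where r: "nA cj x = of_real r" using ex[OF xM] by blast
    have "q x = r" unfolding q_def by (rule the_equality) (use r in auto)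
    thus ?thesis using r by simp
  qed
  have qpos: "q x > 0" if xM: "x \<in> M" "x \<noteq> 0" for x
  proof -
    obtain r where r: "nA cj x = of_real r" "r > 0" using ex[OF xM(1)] xM(2) by blast
    thus ?thesis using qM[OF xM(1)] by simp
  qed
  have q0: "q 0 = 0"
    using qM[OF subspace_0[OF sub]] unfolding nA_def by simp
  have qge: "q x \<ge> 0" if "x \<in> M" for x
    using qpos[OF that] q0 by (cases "x = 0") auto
  have qscale: "q (r *\<^sub>R x) = r^2 * q x" if "x \<in> M" for x r
  proof -
    have "of_real (q (r *\<^sub>R x)) = (of_real (r^2 * q x) :: 'a)"
      using qM[OF subspace_scale[OF sub that]] qM[OF that] nA_scale[OF inv, of r x]
      by (simp add: scaleR_conv_of_real)
    thus ?thesis by (simp only: of_real_eq_iff)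
  qed
  have qexp: "q (t *\<^sub>R x + y) = t^2 * q x + t * (q (x + y) - q x - q y) + q y"
    if "x \<in> M" "y \<in> M" for x y t
  proof -
    have txy: "t *\<^sub>R x + y \<in> M" "x + y \<in> M" using that sub by (auto intro: subspace_add subspace_scale)
    have c1: "x * cj y + y * cj x = of_real (q (x + y) - q x - q y)"
      using nA_add[OF inv, of x y] qM[OF txy(2)] qM[OF that(1)] qM[OF that(2)] by simp
    have cs: "cj (t *\<^sub>R x) = t *\<^sub>R cj x" using inv unfolding anti_involution_def by blast
    have "of_real (q (t *\<^sub>R x + y)) = nA cj (t *\<^sub>R x) + nA cj y + ((t *\<^sub>R x) * cj y + y * cj (t *\<^sub>R x))"
      using qM[OF txy(1)] nA_add[OF inv, of "t *\<^sub>R x" y] by simp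
    also have "\<dots> = (t^2) *\<^sub>R nA cj x + nA cj y + t *\<^sub>R (x * cj y + y * cj x)"
      using nA_scale[OF inv, of t x] cs by (simp add: algebra_simps)
    also have "\<dots> = (of_real (t^2 * q x + t * (q (x + y) - q x - q y) + q y) :: 'a)"
      unfolding c1 qM[OF that(1)] qM[OF that(2)] by (simp add: of_real_def algebra_simps)
    finally show ?thesis by (simp only: of_real_eq_iff)
  qed
  have tri: "sqrt (q (x + y)) \<le> sqrt (q x) + sqrt (q y)" if "x \<in> M" "y \<in> M" for x y
  proof -
    have "(q (x + y) - q x - q y)^2 \<le> 4 * q x * q y"
    proof (rule discr_aux)
      fix t
      have "t *\<^sub>R x + y \<in> M" using that sub by (auto intro: subspace_add subspace_scale)
      hence "q (t *\<^sub>R x + y) \<ge> 0" by (rule qge)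
      thus "q x * t\<^sup>2 + (q (x + y) - q x - q y) * t + q y \<ge> 0"
        unfolding qexp[OF that] by (simp add: algebra_simps)
    qed (use qge that in auto)
    hence "(q (x + y) - q x - q y)^2 \<le> (2 * sqrt (q x) * sqrt (q y))^2"
      using qge that by (simp add: power_mult_distrib)
    hence "q (x + y) - q x - q y \<le> 2 * sqrt (q x) * sqrt (q y)"
      using qge that by (meson abs_le_square_iff abs_ge_self order_trans real_sqrt_ge_zero mult_nonneg_nonneg zero_le_numeral power2_le_imp_le)
    hence "q (x + y) \<le> (sqrt (q x) + sqrt (q y))^2"
      using qge that by (simp add: power2_eq_square algebra_simps)
    thus ?thesis
      using qge that by (simp add: real_le_lsqrt)
  qed
  show ?thesis using qM qpos q0 qscale tri by blast
qed

theorem lemma1: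
  fixes cj :: "'a::real_algebra_1 \<Rightarrow> 'a" and S M :: "'a set"
  assumes findim: "\<exists>B. finite B \<and> span B = (UNIV :: 'a set)"
    and inv: "anti_involution cj"
    and SA_ne: "imag_sphere cj \<noteq> {}"
    and S_gis: "gis cj S"
    and M_ind: "induces_gis cj M S"
  shows "\<exists>N :: 'a \<Rightarrow> real. is_norm N \<and> (\<forall>x\<in>M. nA cj x = of_real ((N x)\<^sup>2))"
proof -
  have sub: "subspace M" and MQ: "M \<subseteq> quad_cone cj" using M_ind unfolding induces_gis_def by auto
  obtain q where qM: "\<And>x. x\<in>M \<Longrightarrow> nA cj x = of_real (q x)"
    and qpos: "\<And>x. x\<in>M \<Longrightarrow> x \<noteq> 0 \<Longrightarrow> q x > 0" and q0: "q 0 = 0"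
    and qscale: "\<And>x r. x\<in>M \<Longrightarrow> q (r *\<^sub>R x) = r^2 * q x"
    and tri: "\<And>x y. x\<in>M \<Longrightarrow> y\<in>M \<Longrightarrow> sqrt (q (x + y)) \<le> sqrt (q x) + sqrt (q y)"
    using quad_form[OF inv sub MQ] by metis
  have qge: "q x \<ge> 0" if "x \<in> M" for x
    using qpos[OF that] q0 by (cases "x = 0") auto
  obtain B0 where B0M: "B0 \<subseteq> M" and indB0: "independent B0" and MB0: "M \<subseteq> span B0"
    using maximal_independent_subset[of M] by blast
  define C where "C = extend_basis B0"
  have B0C: "B0 \<subseteq> C" and indC: "independent C" and spC: "span C = UNIV"
    using extend_basis_superset[OF indB0] independent_extend_basis[OF indB0] span_extend_basis[OF indB0]
    unfolding C_def by auto
  obtain F :: "'a set" where F: "finite F" "span F = UNIV" using findim by blast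
  have finC: "finite C" using independent_span_bound[OF F(1) indC] F(2) by auto
  have finB0: "finite B0" using finC B0C finite_subset by blast
  define R where "R x = representation C x" for x
  have Radd: "R (x + y) c = R x c + R y c" for x y c
    unfolding R_def using representation_add[OF indC, of y x] spC by auto
  have Rscale: "R (r *\<^sub>R x) c = r * R x c" for r x c
    unfolding R_def using representation_scale[OF indC, of x r] spC by auto
  have Rsum: "(\<Sum>c\<in>C. R x c *\<^sub>R c) = x" for x
    unfolding R_def using sum_representation_eq[OF indC _ finC] spC by auto
  have RM: "R x c = representation B0 x c" if "x \<in> M" for x c
    unfolding R_def using representation_extend[OF indC _ B0C, of x] that MB0 by auto
  define P where "P x = (\<Sum>c\<in>B0. R x c *\<^sub>R c)" for x
  have PM: "P x \<in> M" for x
    unfolding P_def using B0M by (intro subspace_sum[OF sub] subspace_scale[OF sub]) auto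
  have Padd: "P (x + y) = P x + P y" for x y
    unfolding P_def Radd by (simp add: scaleR_add_left sum.distrib)
  have Pscale: "P (r *\<^sub>R x) = r *\<^sub>R P x" for r x
    unfolding P_def Rscale by (simp add: scaleR_sum_right)
  have Pid: "P x = x" if "x \<in> M" for x
    unfolding P_def RM[OF that] using sum_representation_eq[OF indB0 _ finB0, of x] that MB0 by auto
  define E where "E x = (\<Sum>c\<in>C - B0. \<bar>R x c\<bar>)" for x
  have EM: "E x = 0" if "x \<in> M" for x
    unfolding E_def using RM[OF that] representation_ne_zero[of B0 x] by (force intro!: sum.neutral)
  have Ege: "E x \<ge> 0" for x unfolding E_def by (simp add: sum_nonneg)
  define N where "N x = sqrt (q (P x)) + E x" for x
  have PE0: "x = 0" if "P x = 0" "E x = 0" for x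
  proof -
    have z: "R x c = 0" if "c \<in> C - B0" for c
      using \<open>E x = 0\<close> that finC unfolding E_def by (simp add: sum_nonneg_eq_0_iff)
    have "x = (\<Sum>c\<in>C. R x c *\<^sub>R c)" using Rsum by simp
    also have "\<dots> = (\<Sum>c\<in>B0. R x c *\<^sub>R c) + (\<Sum>c\<in>C - B0. R x c *\<^sub>R c)"
      using sum.subset_diff[OF B0C finC] by (simp add: add.commute)
    also have "\<dots> = P x" unfolding P_def using z by simp
    finally show ?thesis using that by simp
  qed
  have P0: "P 0 = 0" using Pscale[of 0 0] by simp
  have E0: "E 0 = 0" using EM subspace_0[OF sub] by blast
  have "is_norm N"
    unfolding is_norm_def
  proof (intro conjI allI)
    fix x show "N x \<ge> 0" unfolding N_def using qge[OF PM] Ege by simp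
  next
    fix x show "N x = 0 \<longleftrightarrow> x = 0"
    proof
      assume h: "N x = 0"
      have s: "sqrt (q (P x)) \<ge> 0" using qge[OF PM[of x]] by simp
      have "sqrt (q (P x)) = 0" "E x = 0" using h s Ege[of x] unfolding N_def by linarith+
      hence "q (P x) = 0" "E x = 0" by auto
      hence "P x = 0" "E x = 0" using qpos[OF PM[of x]] by fastforce+
      thus "x = 0" by (rule PE0)
    qed (simp add: N_def P0 q0 E0)
  next
    fix r x
    have "E (r *\<^sub>R x) = \<bar>r\<bar> * E x" unfolding E_def Rscale by (simp add: abs_mult sum_distrib_left)
    moreover have "sqrt (q (P (r *\<^sub>R x))) = \<bar>r\<bar> * sqrt (q (P x))"
      unfolding Pscale qscale[OF PM] by (simp add: real_sqrt_mult)
    ultimately show "N (r *\<^sub>R x) = \<bar>r\<bar> * N x" unfolding N_def by (simp add: algebra_simps)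
  next
    fix x y
    have "E (x + y) \<le> E x + E y" unfolding E_def Radd
      by (simp add: sum.distrib[symmetric] sum_mono abs_triangle_ineq)
    moreover have "sqrt (q (P (x + y))) \<le> sqrt (q (P x)) + sqrt (q (P y))"
      unfolding Padd by (rule tri[OF PM PM])
    ultimately show "N (x + y) \<le> N x + N y" unfolding N_def by simp
  qed
  moreover have "\<forall>x\<in>M. nA cj x = of_real ((N x)\<^sup>2)"
  proof
    fix x assume x: "x \<in> M"
    have "N x = sqrt (q x)" unfolding N_def Pid[OF x] EM[OF x] by simp
    hence "(N x)\<^sup>2 = q x" using qge[OF x] by simp
    thus "nA cj x = of_real ((N x)\<^sup>2)" using qM[OF x] by simp
  qed
  ultimately show ?thesis by blast
qed

end
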